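(* Let $n \geq 3$ and for $b > 1$ define $$M_n(b) = \int^{1}_{-1} du\int^{\infty}_{b} \frac{\log\left(\frac{(v^2-1)(u^2-b^2)}{(v^2-b^2)(u^2-1)}\right)}{(v-u)^{n}}\,dv.$$ Then for all $b \in (1,2]$, $$(b-1)^{n-2}M_n(b) \geq \frac{P_{n-3}(1)+\left(1-\frac{1}{3^{n-2}}\right)\left(P_{n-2}(1)+\log\left(3/4\right)\right)}{(n-1)(n-2)}.$$
   Context: For $k \geq 1$, $P_k(1) = 1+\frac12+\cdots+\frac1k$ (the $k$-th harmonic number), and $P_0(1)=0$. *)

theory Defs
  imports "HOL-Analysis.Analysis"
begin

definition Mint :: "nat \<Rightarrow> real \<Rightarrow> real \<Rightarrow> real \<Rightarrow> real" where
  "Mint n b u v = ln (((v\<^sup>2 - 1) * (u\<^sup>2 - b\<^sup>2)) / ((v\<^sup>2 - b\<^sup>2) * (u\<^sup>2 - 1))) / (v - u) ^ n"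

definition M :: "nat \<Rightarrow> real \<Rightarrow> real" where
  "M n b = (LBINT u=ereal (-1)..ereal 1. (LBINT v=ereal b..\<infinity>. Mint n b u v))"

end

theory Submission
  imports Defs
begin
definition Gf :: "nat \<Rightarrow> real \<Rightarrow> real" where
  "Gf j t = ((t^j - 1) * (- ln (1 - t)) + (\<Sum>i<j. t^Suc i / real (Suc i))) / real j"

lemma sum_deriv: "((\<lambda>t. \<Sum>i<j. t^Suc i / real (Suc i)) has_real_derivative (\<Sum>i<j. t^i)) (at t)"
proof (induction j)
  case 0 then show ?case by simp
next
  case (Suc j)
  have "((\<lambda>t. t^Suc j / real (Suc j)) has_real_derivative t^j) (at t)"
    using DERIV_cdivide[OF DERIV_pow[of "Suc j" t], of "real (Suc j)"] by (simp del: of_nat_Suc)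
  from DERIV_add[OF Suc this] show ?case by (simp add: add.commute)
qed

lemma Gf_deriv:
  assumes "j \<ge> 1" "t < 1"
  shows "(Gf j has_real_derivative t^(j-1) * (- ln (1 - t))) (at t)"
proof -
  have d1: "((\<lambda>t. (t^j - 1) * (- ln (1 - t))) has_real_derivative
      (real j * t^(j-1)) * (- ln (1 - t)) + (t^j - 1) * (1 / (1 - t))) (at t)"
    using assms by (auto intro!: derivative_eq_intros simp: field_simps)
  have "((\<lambda>t. ((t^j - 1) * (- ln (1 - t)) + (\<Sum>i<j. t^Suc i / real (Suc i))) / real j) has_real_derivative
      ((real j * t^(j-1)) * (- ln (1 - t)) + (t^j - 1) * (1 / (1 - t)) + (\<Sum>i<j. t^i)) / real j) (at t)"
    by (intro DERIV_cdivide DERIV_add d1 sum_deriv)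
  moreover have "(t^j - 1) * (1 / (1 - t)) + (\<Sum>i<j. t^i) = 0"
    using one_diff_power_eq[of t j] assms by (simp add: field_simps)
  hence "((real j * t^(j-1)) * (- ln (1 - t)) + (t^j - 1) * (1 / (1 - t)) + (\<Sum>i<j. t^i)) / real j
      = t^(j-1) * (- ln (1 - t))" using assms by (simp add: field_simps)
  moreover have "Gf j = (\<lambda>t. ((t^j - 1) * (- ln (1 - t)) + (\<Sum>i<j. t^Suc i / real (Suc i))) / real j)"
    by (simp add: Gf_def fun_eq_iff)
  ultimately show ?thesis by metis
qed

lemma Gf_lim: "(Gf j \<longlongrightarrow> harm j / real j) (at_left 1)" if "j \<ge> 1"
proof -
  have a: "((\<lambda>t::real. (1-t)*ln(1-t)) \<longlongrightarrow> 0) (at_left 1)" by real_asymp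
  have b: "((\<lambda>t. (\<Sum>i<j. t^i) * ((1-t)*ln(1-t))) \<longlongrightarrow> (\<Sum>i<j. 1^i) * 0) (at_left (1::real))"
    by (intro tendsto_mult a tendsto_intros)
  have c: "((\<lambda>t::real. \<Sum>i<j. t^Suc i / real (Suc i)) \<longlongrightarrow> (\<Sum>i<j. 1^Suc i/real(Suc i))) (at_left 1)"
    by (intro tendsto_intros) auto
  have d: "((\<lambda>t. ((\<Sum>i<j. t^i) * ((1-t)*ln(1-t)) + (\<Sum>i<j. t^Suc i / real (Suc i))) / real j)
     \<longlongrightarrow> ((\<Sum>i<j. 1^i) * 0 + (\<Sum>i<j. 1^Suc i/real(Suc i))) / real j) (at_left (1::real))"
    using that by (intro tendsto_divide b c tendsto_add tendsto_const) auto
  have e: "Gf j t = ((\<Sum>i<j. t^i) * ((1-t)*ln(1-t)) + (\<Sum>i<j. t^Suc i / real (Suc i))) / real j" for t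
  proof -
    have h: "1 - t^j = (1-t) * (\<Sum>i<j. t^i)" by (rule one_diff_power_eq)
    have "(t^j - 1) * (- ln (1 - t)) = (1 - t^j) * ln (1-t)" by (simp add: algebra_simps)
    also have "\<dots> = (\<Sum>i<j. t^i) * ((1-t)*ln(1-t))" by (simp only: h mult_ac)
    finally show ?thesis unfolding Gf_def by simp
  qed
  have f: "((\<Sum>i<j. 1^i) * 0 + (\<Sum>i<j. 1^Suc i/real(Suc i))) / real j = harm j / real j"
    by (simp add: harm_altdef divide_inverse)
  show ?thesis using d unfolding f e[symmetric] by simp
qed

lemma Gf_zero[simp]: "Gf j 0 = 0"
  by (simp add: Gf_def)

lemma Gf_mono:
  assumes "j \<ge> 1" "0 \<le> x" "x \<le> y" "y < 1"
  shows "Gf j x \<le> Gf j y"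
proof (rule DERIV_nonneg_imp_nondecreasing[OF assms(3)])
  fix t assume t: "x \<le> t" "t \<le> y"
  have "0 \<le> - ln (1 - t)" using t assms by simp
  then have "0 \<le> t^(j-1) * (- ln (1 - t))" using t assms by (intro mult_nonneg_nonneg) auto
  then show "\<exists>z. (Gf j has_real_derivative z) (at t) \<and> 0 \<le> z"
    using Gf_deriv[of j t] t assms by auto
qed

lemma FTC_Ioo:
  fixes F f :: "real \<Rightarrow> real" and a b A B :: real
  assumes "a < b"
   and "\<And>x. a < x \<Longrightarrow> x < b \<Longrightarrow> (F has_real_derivative f x) (at x)"
   and "\<And>x. a < x \<Longrightarrow> x < b \<Longrightarrow> isCont f x"
   and "\<And>x. a < x \<Longrightarrow> x < b \<Longrightarrow> 0 \<le> f x"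
   and "(F \<longlongrightarrow> A) (at_right a)" "(F \<longlongrightarrow> B) (at_left b)"
  shows "(\<integral>\<^sup>+x. ennreal (indicator {a<..<b} x * f x) \<partial>lborel) = ennreal (B - A)"
proof -
  note r = interval_integral_FTC_nonneg[of "ereal a" "ereal b" F f A B]
  have i: "set_integrable lborel {a<..<b} f" and v: "(LBINT x=ereal a..ereal b. f x) = B - A"
    using r assms by (auto simp: ereal_tendsto_simps1)
  have "(\<integral>\<^sup>+x. ennreal (indicator {a<..<b} x * f x) \<partial>lborel) = ennreal (LINT x|lborel. indicator {a<..<b} x * f x)"
    using i unfolding set_integrable_def by (intro nn_integral_eq_integral) (auto simp: indicator_def assms)
  also have "(LINT x|lborel. indicator {a<..<b} x * f x) = B - A"
    using v assms(1) by (simp add: interval_lebesgue_integral_def set_lebesgue_integral_def)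
  finally show ?thesis .
qed

lemma FTC_Ioi:
  fixes F f :: "real \<Rightarrow> real" and a A B :: real
  assumes "\<And>x. a < x \<Longrightarrow> (F has_real_derivative f x) (at x)"
   and "\<And>x. a < x \<Longrightarrow> isCont f x"
   and "\<And>x. a < x \<Longrightarrow> 0 \<le> f x"
   and "(F \<longlongrightarrow> A) (at_right a)" "(F \<longlongrightarrow> B) at_top"
  shows "(\<integral>\<^sup>+x. ennreal (indicator {a<..} x * f x) \<partial>lborel) = ennreal (B - A)"
proof -
  note r = interval_integral_FTC_nonneg[of "ereal a" "\<infinity>" F f A B]
  have i: "set_integrable lborel {a<..} f" and v: "(LBINT x=ereal a..\<infinity>. f x) = B - A"
    using r assms by (auto simp: ereal_tendsto_simps1)
  have "(\<integral>\<^sup>+x. ennreal (indicator {a<..} x * f x) \<partial>lborel) = ennreal (LINT x|lborel. indicator {a<..} x * f x)"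
    using i unfolding set_integrable_def by (intro nn_integral_eq_integral) (auto simp: indicator_def assms)
  also have "(LINT x|lborel. indicator {a<..} x * f x) = B - A"
    using v by (simp add: interval_lebesgue_integral_def set_lebesgue_integral_def)
  finally show ?thesis .
qed
lemma Gf_isCont: "j \<ge> 1 \<Longrightarrow> t < 1 \<Longrightarrow> isCont (Gf j) t"
  using Gf_deriv DERIV_isCont by blast

lemma alg1: "(B::real) > 0 \<Longrightarrow> V > 0 \<Longrightarrow> - (((B/V)^k * L) * (-B/V^2)) / B^(Suc k) = L / V^(Suc k + 1)"
  by (simp add: power_divide field_simps power2_eq_square)

lemma int_L:
  assumes b: "1 < b" and j: "j \<ge> 1"
  shows "(\<integral>\<^sup>+v. ennreal (indicator {b<..} v * (ln ((v-1)/(v-b)) / (v-1)^(j+1))) \<partial>lborel)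
         = ennreal (harm j / (real j * (b-1)^j))"
proof -
  obtain k where k: "j = Suc k" using j by (cases j) auto
  define F where "F v = - Gf j ((b-1)/(v-1)) / (b-1)^j" for v
  have "(\<integral>\<^sup>+v. ennreal (indicator {b<..} v * (ln ((v-1)/(v-b)) / (v-1)^(j+1))) \<partial>lborel)
       = ennreal (0 - (- (harm j / real j) / (b-1)^j))"
  proof (rule FTC_Ioi[where F=F])
    fix v assume v: "b < v"
    let ?t = "(b-1)/(v-1)"
    have t1: "?t < 1" using v b by simp
    have dt: "((\<lambda>v. (b-1)/(v-1)) has_real_derivative (-(b-1)/(v-1)^2)) (at v)"
      using v b by (auto intro!: derivative_eq_intros simp: power2_eq_square)
    have "((\<lambda>v. Gf j ((b-1)/(v-1))) has_real_derivative (?t^(j-1) * (- ln (1 - ?t))) * (-(b-1)/(v-1)^2)) (at v)"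
      by (rule DERIV_chain2[OF Gf_deriv[OF j t1] dt])
    then have d: "(F has_real_derivative - ((?t^(j-1) * (- ln (1 - ?t))) * (-(b-1)/(v-1)^2)) / (b-1)^j) (at v)"
      unfolding F_def by (intro DERIV_cdivide DERIV_minus)
    have e1: "1 - ?t = (v-b)/(v-1)" using v b by (simp add: field_simps)
    have e2: "- ln ((v-b)/(v-1)) = ln ((v-1)/(v-b))" using v b by (simp add: ln_div)
    have "- ((?t^(j-1) * (- ln (1 - ?t))) * (-(b-1)/(v-1)^2)) / (b-1)^j = ln ((v-1)/(v-b)) / (v-1)^(j+1)"
      unfolding e1 e2 using v b alg1[of "b-1" "v-1" k] by (simp add: k)
    with d show "(F has_real_derivative ln ((v-1)/(v-b)) / (v-1)^(j+1)) (at v)" by simp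
    show "isCont (\<lambda>v. ln ((v-1)/(v-b)) / (v-1)^(j+1)) v"
      using v b by (auto intro!: continuous_intros)
    have "1 \<le> (v-1)/(v-b)" using v b by simp
    then show "0 \<le> ln ((v-1)/(v-b)) / (v-1)^(j+1)" using v b by simp
  next
    have l1: "filterlim (\<lambda>v. (b-1)/(v-1)) (at_left 1) (at_right b)"
    proof (rule tendsto_imp_filterlim_at_left)
      have "((\<lambda>v. (b-1)/(v-1)) \<longlongrightarrow> (b-1)/(b-1)) (at_right b)"
        using b by (intro tendsto_intros) auto
      then show "((\<lambda>v. (b-1)/(v-1)) \<longlongrightarrow> 1) (at_right b)" using b by simp
      show "\<forall>\<^sub>F v in at_right b. (b-1)/(v-1) < 1"
        using eventually_at_right_less[of b] by eventually_elim (use b in simp)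
    qed
    have "((\<lambda>v. Gf j ((b-1)/(v-1))) \<longlongrightarrow> harm j / real j) (at_right b)"
      by (rule filterlim_compose[OF Gf_lim[OF j] l1])
    then show "(F \<longlongrightarrow> - (harm j / real j) / (b-1)^j) (at_right b)"
      unfolding F_def using b by (intro tendsto_intros) auto
  next
    have "((\<lambda>v. (b-1)/(v-1)) \<longlongrightarrow> 0) at_top" by real_asymp
    then have "((\<lambda>v. Gf j ((b-1)/(v-1))) \<longlongrightarrow> Gf j 0) at_top"
      by (intro isCont_tendsto_compose[OF Gf_isCont[OF j]]) auto
    then show "(F \<longlongrightarrow> 0) at_top" unfolding F_def using b by (auto intro!: tendsto_eq_intros)
  qed
  also have "0 - (- (harm j / real j) / (b-1)^j) = harm j / (real j * (b-1)^j)" by simp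
  finally show ?thesis .
qed
lemma ev_left: "\<forall>\<^sub>F u in at_left (a::real). u < a"
  by (simp add: eventually_at_filter)

lemma alg2: "(B::real) > 0 \<Longrightarrow> V > 0 \<Longrightarrow> (((B/V)^k * L) * (B/V^2)) / B^(Suc k) = L / V^(Suc k + 1)"
  by (simp add: power_divide field_simps power2_eq_square)

lemma int_R:
  assumes b: "1 < b" and j: "j \<ge> 1"
  shows "(\<integral>\<^sup>+u. ennreal (indicator {-1<..<1} u * (ln ((b-u)/(1-u)) / (b-u)^(j+1))) \<partial>lborel)
         = ennreal ((harm j / real j - Gf j ((b-1)/(b+1))) / (b-1)^j)"
proof -
  obtain k where k: "j = Suc k" using j by (cases j) auto
  define F where "F u = Gf j ((b-1)/(b-u)) / (b-1)^j" for u
  have "(\<integral>\<^sup>+u. ennreal (indicator {-1<..<1} u * (ln ((b-u)/(1-u)) / (b-u)^(j+1))) \<partial>lborel)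
       = ennreal (harm j / real j / (b-1)^j - Gf j ((b-1)/(b+1)) / (b-1)^j)"
  proof (rule FTC_Ioo[where F=F])
    fix u :: real assume u: "-1 < u" "u < 1"
    let ?t = "(b-1)/(b-u)"
    have t1: "?t < 1" using u b by simp
    have dt: "((\<lambda>u. (b-1)/(b-u)) has_real_derivative ((b-1)/(b-u)^2)) (at u)"
      using u b by (auto intro!: derivative_eq_intros simp: power2_eq_square)
    have "((\<lambda>u. Gf j ((b-1)/(b-u))) has_real_derivative (?t^(j-1) * (- ln (1 - ?t))) * ((b-1)/(b-u)^2)) (at u)"
      by (rule DERIV_chain2[OF Gf_deriv[OF j t1] dt])
    then have d: "(F has_real_derivative ((?t^(j-1) * (- ln (1 - ?t))) * ((b-1)/(b-u)^2)) / (b-1)^j) (at u)"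
      unfolding F_def by (intro DERIV_cdivide)
    have e1: "1 - ?t = (1-u)/(b-u)" using u b by (simp add: field_simps)
    have e2: "- ln ((1-u)/(b-u)) = ln ((b-u)/(1-u))" using u b by (simp add: ln_div)
    have "((?t^(j-1) * (- ln (1 - ?t))) * ((b-1)/(b-u)^2)) / (b-1)^j = ln ((b-u)/(1-u)) / (b-u)^(j+1)"
      unfolding e1 e2 using u b alg2[of "b-1" "b-u" k] by (simp add: k)
    with d show "(F has_real_derivative ln ((b-u)/(1-u)) / (b-u)^(j+1)) (at u)" by simp
    show "isCont (\<lambda>u. ln ((b-u)/(1-u)) / (b-u)^(j+1)) u"
      using u b by (auto intro!: continuous_intros)
    have "1 \<le> (b-u)/(1-u)" using u b by simp
    then show "0 \<le> ln ((b-u)/(1-u)) / (b-u)^(j+1)" using u b by simp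
  next
    have "((\<lambda>u. (b-1)/(b-u)) \<longlongrightarrow> (b-1)/(b+1)) (at_right (-1))"
      using b by (intro tendsto_eq_intros) auto
    then have "((\<lambda>u. Gf j ((b-1)/(b-u))) \<longlongrightarrow> Gf j ((b-1)/(b+1))) (at_right (-1))"
      using b by (intro isCont_tendsto_compose[OF Gf_isCont[OF j]]) auto
    then show "(F \<longlongrightarrow> Gf j ((b-1)/(b+1)) / (b-1)^j) (at_right (-1))"
      unfolding F_def using b by (intro tendsto_intros) auto
  next
    have l1: "filterlim (\<lambda>u. (b-1)/(b-u)) (at_left 1) (at_left 1)"
    proof (rule tendsto_imp_filterlim_at_left)
      have "((\<lambda>u. (b-1)/(b-u)) \<longlongrightarrow> (b-1)/(b-1)) (at_left 1)"
        using b by (intro tendsto_intros) auto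
      then show "((\<lambda>u. (b-1)/(b-u)) \<longlongrightarrow> 1) (at_left 1)" using b by simp
      show "\<forall>\<^sub>F u in at_left 1. (b-1)/(b-u) < 1"
        using ev_left[of 1] by eventually_elim (use b in simp)
    qed
    have "((\<lambda>u. Gf j ((b-1)/(b-u))) \<longlongrightarrow> harm j / real j) (at_left 1)"
      by (rule filterlim_compose[OF Gf_lim[OF j] l1])
    then show "(F \<longlongrightarrow> harm j / real j / (b-1)^j) (at_left 1)"
      unfolding F_def using b by (intro tendsto_intros) auto
  qed simp
  also have "harm j / real j / (b-1)^j - Gf j ((b-1)/(b+1)) / (b-1)^j
     = (harm j / real j - Gf j ((b-1)/(b+1))) / (b-1)^j" by (simp add: diff_divide_distrib)
  finally show ?thesis .
qed

lemma alg3: "(w::real) \<noteq> 0 \<Longrightarrow> real (j+1) * w^j * a * inverse ((w^(j+1))^Suc (Suc 0)) / real (j+1) = a / w^(j+2)"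
proof -
  assume w: "w \<noteq> 0"
  have "(w^(j+1))^Suc (Suc 0) = w^j * w^(j+2)" by (simp add: power_add)
  then show ?thesis using w by (simp add: field_simps del: of_nat_Suc)
qed
lemma deriv_powinv_aff:
  assumes "a * w + c \<noteq> (0::real)"
  shows "((\<lambda>x. inverse ((a*x+c)^(j+1)) / real (j+1)) has_real_derivative - (a / (a*w+c)^(j+2))) (at w)"
proof -
  have d: "((\<lambda>x. (a*x+c)^(j+1)) has_real_derivative real (j+1) * (a*w+c)^j * a) (at w)"
  proof -
    have a: "((\<lambda>x. x^(j+1)) has_real_derivative real (j+1) * (a*w+c)^j) (at (a*w+c))"
      using DERIV_pow[of "j+1" "a*w+c"] by simp
    have c: "((\<lambda>x. a*x+c) has_real_derivative a) (at w)" by (auto intro!: derivative_eq_intros)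
    show ?thesis using DERIV_chain2[OF a c] by simp
  qed
  have D1: "((\<lambda>x. inverse ((a*x+c)^(j+1)) / real (j+1)) has_real_derivative
      - (real (j+1) * (a*w+c)^j * a * inverse (((a*w+c)^(j+1))^Suc (Suc 0))) / real (j+1)) (at w)"
    using assms by (intro DERIV_cdivide DERIV_inverse_fun d) auto
  have e: "- (real (j+1) * (a*w+c)^j * a * inverse (((a*w+c)^(j+1))^Suc (Suc 0))) / real (j+1) = - (a / (a*w+c)^(j+2))"
    using alg3[of "a*w+c" j a] assms by simp
  show ?thesis using D1 unfolding e .
qed
lemma deriv_pv:
  assumes "w \<noteq> (u::real)"
  shows "((\<lambda>v. - 1 / (real (j+1) * (v-u)^(j+1))) has_real_derivative 1 / (w-u)^(j+2)) (at w)"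
proof -
  have "((\<lambda>x. - (inverse ((1*x+(-u))^(j+1)) / real (j+1))) has_real_derivative - (- (1 / (1*w+(-u))^(j+2)))) (at w)"
    using assms by (intro DERIV_minus deriv_powinv_aff) auto
  moreover have "(\<lambda>x. - (inverse ((1*x+(-u))^(j+1)) / real (j+1))) = (\<lambda>v. - 1 / (real (j+1) * (v-u)^(j+1)))"
    by (simp add: fun_eq_iff divide_inverse mult.commute)
  ultimately show ?thesis by simp
qed
lemma deriv_pu:
  assumes "w \<noteq> (v::real)"
  shows "((\<lambda>u. 1 / (real (j+1) * (v-u)^(j+1))) has_real_derivative 1 / (v-w)^(j+2)) (at w)"
proof -
  have "((\<lambda>x. inverse (((-1)*x+v)^(j+1)) / real (j+1)) has_real_derivative - (-1 / ((-1)*w+v)^(j+2))) (at w)"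
    using assms by (intro deriv_powinv_aff) auto
  moreover have "(\<lambda>x. inverse (((-1)*x+v)^(j+1)) / real (j+1)) = (\<lambda>u. 1 / (real (j+1) * (v-u)^(j+1)))"
    by (simp add: fun_eq_iff divide_inverse mult.commute)
  ultimately show ?thesis by simp
qed

lemma int_pow_v:
  assumes u: "u < b"
  shows "(\<integral>\<^sup>+v. ennreal (indicator {b<..} v * (1 / (v-u)^(j+2))) \<partial>lborel)
     = ennreal (1 / (real (j+1) * (b-u)^(j+1)))"
proof -
  define F where "F v = - 1 / (real (j+1) * (v-u)^(j+1))" for v
  have "(\<integral>\<^sup>+v. ennreal (indicator {b<..} v * (1 / (v-u)^(j+2))) \<partial>lborel)
     = ennreal (0 - (- 1 / (real (j+1) * (b-u)^(j+1))))"
  proof (rule FTC_Ioi[where F=F])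
    fix v assume v: "b < v"
    show "(F has_real_derivative 1 / (v-u)^(j+2)) (at v)"
      unfolding F_def using v u deriv_pv[of v u j] by simp
    show "isCont (\<lambda>v. 1 / (v-u)^(j+2)) v" using v u by (auto intro!: continuous_intros)
    show "0 \<le> 1 / (v-u)^(j+2)" using v u by simp
  next
    show "(F \<longlongrightarrow> - 1 / (real (j+1) * (b-u)^(j+1))) (at_right b)"
      unfolding F_def using u by (intro tendsto_intros) auto
  next
    have "filterlim (\<lambda>v. v - u) at_top at_top" by real_asymp
    then have "filterlim (\<lambda>v. real (j+1) * (v-u)^(j+1)) at_top at_top"
      by (intro filterlim_tendsto_pos_mult_at_top[OF tendsto_const] filterlim_pow_at_top) auto
    then have "((\<lambda>v. inverse (real (j+1) * (v-u)^(j+1))) \<longlongrightarrow> 0) at_top"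
      by (rule tendsto_inverse_0_at_top)
    then have "((\<lambda>v. - inverse (real (j+1) * (v-u)^(j+1))) \<longlongrightarrow> - 0) at_top"
      by (rule tendsto_minus)
    then show "(F \<longlongrightarrow> 0) at_top" unfolding F_def by (simp add: divide_inverse)
  qed
  then show ?thesis by simp
qed

lemma int_pow_u:
  assumes v: "1 < v"
  shows "(\<integral>\<^sup>+u. ennreal (indicator {-1<..<1} u * (1 / (v-u)^(j+2))) \<partial>lborel)
     = ennreal ((1/(v-1)^(j+1) - 1/(v+1)^(j+1)) / real (j+1))"
proof -
  define F where "F u = 1 / (real (j+1) * (v-u)^(j+1))" for u
  have "(\<integral>\<^sup>+u. ennreal (indicator {-1<..<1} u * (1 / (v-u)^(j+2))) \<partial>lborel)
     = ennreal (F 1 - F (-1))"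
  proof (rule FTC_Ioo[where F=F])
    fix u :: real assume u: "-1 < u" "u < 1"
    show "(F has_real_derivative 1 / (v-u)^(j+2)) (at u)"
      unfolding F_def using v u deriv_pu[of u v j] by simp
    show "isCont (\<lambda>u. 1 / (v-u)^(j+2)) u" using v u by (auto intro!: continuous_intros)
    show "0 \<le> 1 / (v-u)^(j+2)" using v u by simp
  next
    show "(F \<longlongrightarrow> F (-1)) (at_right (-1))"
      unfolding F_def using v by (intro tendsto_intros) auto
    show "(F \<longlongrightarrow> F 1) (at_left 1)"
      unfolding F_def using v by (intro tendsto_intros) auto
  qed simp
  also have "F 1 - F (-1) = (1/(v-1)^(j+1) - 1/(v+1)^(j+1)) / real (j+1)"
  proof -
    have "\<And>X Y c::real. 1/(c*X) - 1/(c*Y) = (1/X - 1/Y)/c" by (simp add: diff_divide_distrib mult.commute)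
    then show ?thesis unfolding F_def by simp
  qed
  finally show ?thesis .
qed

lemma int_Rr:
  assumes b: "1 < b"
  shows "(\<integral>\<^sup>+u. ennreal (indicator {-1<..<1} u * ln ((b+u)/(1+u))) \<partial>lborel) < \<infinity>"
proof -
  define F where "F u = (b+u) * ln (b+u) - (1+u) * ln (1+u)" for u
  have "(\<integral>\<^sup>+u. ennreal (indicator {-1<..<1} u * ln ((b+u)/(1+u))) \<partial>lborel)
     = ennreal (F 1 - (b-1) * ln (b-1))"
  proof (rule FTC_Ioo[where F=F])
    fix u :: real assume u: "-1 < u" "u < 1"
    have "(F has_real_derivative (ln (b+u) + 1) - (ln (1+u) + 1)) (at u)"
    proof -
      have "((\<lambda>u. (b+u) * ln (b+u)) has_real_derivative ln (b+u) + 1) (at u)"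
        using b u by (auto intro!: derivative_eq_intros)
      moreover have "((\<lambda>u. (1+u) * ln (1+u)) has_real_derivative ln (1+u) + 1) (at u)"
        using b u by (auto intro!: derivative_eq_intros)
      ultimately show ?thesis unfolding F_def by (rule DERIV_diff)
    qed
    moreover have "(ln (b+u) + 1) - (ln (1+u) + 1) = ln ((b+u)/(1+u))" using b u by (simp add: ln_div)
    ultimately show "(F has_real_derivative ln ((b+u)/(1+u))) (at u)" by simp
    show "isCont (\<lambda>u. ln ((b+u)/(1+u))) u" using b u by (auto intro!: continuous_intros)
    have "1 \<le> (b+u)/(1+u)" using u b by simp
    then show "0 \<le> ln ((b+u)/(1+u))" by simp
  next
    have l0: "((\<lambda>x::real. x * ln x) \<longlongrightarrow> 0) (at_right 0)" by real_asymp
    have l1: "filterlim (\<lambda>u::real. 1 + u) (at_right 0) (at_right (-1))"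
    proof (rule tendsto_imp_filterlim_at_right)
      show "((\<lambda>u::real. 1 + u) \<longlongrightarrow> 0) (at_right (-1))" by (auto intro!: tendsto_eq_intros)
      show "\<forall>\<^sub>F u in at_right (-1). 0 < 1 + (u::real)"
        using eventually_at_right_less[of "-1::real"] by eventually_elim simp
    qed
    have l: "((\<lambda>u::real. (1+u) * ln (1+u)) \<longlongrightarrow> 0) (at_right (-1))"
      using filterlim_compose[OF l0 l1] by simp
    have "((\<lambda>u. (b+u) * ln (b+u)) \<longlongrightarrow> (b + -1) * ln (b + -1)) (at_right (-1))"
      using b by (intro tendsto_intros) auto
    from tendsto_diff[OF this l] show "(F \<longlongrightarrow> (b-1) * ln (b-1)) (at_right (-1))"
      unfolding F_def by simp
  next
    show "(F \<longlongrightarrow> F 1) (at_left 1)"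
      unfolding F_def using b by (intro tendsto_intros) auto
  qed simp
  then show ?thesis by simp
qed
lemma pointwise:
  assumes b: "1 < b" and u: "-1 < u" "u < 1" and v: "b < v"
  shows "Mint n b u v = ln ((v-1)/(v-b)) / (v-u)^n + ln ((b-u)/(1-u)) / (v-u)^n
            + ln (((v+1)*(b+u))/((v+b)*(1+u))) / (v-u)^n"
    and "0 \<le> ln ((v-1)/(v-b))" "0 \<le> ln ((b-u)/(1-u))"
    and "0 \<le> ln (((v+1)*(b+u))/((v+b)*(1+u)))"
    and "ln (((v+1)*(b+u))/((v+b)*(1+u))) \<le> ln ((b+u)/(1+u))"
    and "0 < (v-u)^n"
proof -
  have p1: "0 < (v-1)/(v-b)" and p2: "0 < (b-u)/(1-u)" and p3: "0 < ((v+1)*(b+u))/((v+b)*(1+u))"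
    using b u v by (auto intro!: divide_pos_pos mult_pos_pos)
  have eq: "((v\<^sup>2 - 1) * (u\<^sup>2 - b\<^sup>2)) / ((v\<^sup>2 - b\<^sup>2) * (u\<^sup>2 - 1))
      = ((v-1)/(v-b)) * ((b-u)/(1-u)) * (((v+1)*(b+u))/((v+b)*(1+u)))"
  proof -
    have n: "(v\<^sup>2 - 1) * (u\<^sup>2 - b\<^sup>2) = - ((v-1)*(b-u)*((v+1)*(b+u)))"
      by (simp add: power2_eq_square algebra_simps)
    have d: "(v\<^sup>2 - b\<^sup>2) * (u\<^sup>2 - 1) = - ((v-b)*(1-u)*((v+b)*(1+u)))"
      by (simp add: power2_eq_square algebra_simps)
    show ?thesis unfolding n d by (simp add: times_divide_times_eq)
  qed
  show "Mint n b u v = ln ((v-1)/(v-b)) / (v-u)^n + ln ((b-u)/(1-u)) / (v-u)^n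
            + ln (((v+1)*(b+u))/((v+b)*(1+u))) / (v-u)^n"
    unfolding Mint_def eq ln_mult_pos[OF mult_pos_pos[OF p1 p2] p3] ln_mult_pos[OF p1 p2]
    by (simp only: add_divide_distrib)
  have "1 \<le> (v-1)/(v-b)" using b v by simp
  then show "0 \<le> ln ((v-1)/(v-b))" by simp
  have "1 \<le> (b-u)/(1-u)" using b u by simp
  then show "0 \<le> ln ((b-u)/(1-u))" by simp
  have "(v+b)*(1+u) \<le> (v+1)*(b+u)"
  proof -
    have "(v+1)*(b+u) - (v+b)*(1+u) = (b-1)*(v-u)" by (simp add: algebra_simps)
    moreover have "0 \<le> (b-1)*(v-u)" using b u v by simp
    ultimately show ?thesis by linarith
  qed
  then have "1 \<le> ((v+1)*(b+u))/((v+b)*(1+u))" using b u v by (subst le_divide_eq_1_pos) auto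
  then show "0 \<le> ln (((v+1)*(b+u))/((v+b)*(1+u)))" by simp
  have "((v+1)*(b+u))/((v+b)*(1+u)) = ((v+1)/(v+b)) * ((b+u)/(1+u))" by simp
  also have "\<dots> \<le> 1 * ((b+u)/(1+u))"
    using b u v by (intro mult_right_mono) auto
  finally show "ln (((v+1)*(b+u))/((v+b)*(1+u))) \<le> ln ((b+u)/(1+u))"
    using p3 by simp
  show "0 < (v-u)^n" using u v b by simp
qed
lemma sum_third: "(\<Sum>i<m. (1/3::real)^Suc i / real (Suc i)) \<le> 5/12 - (1/3)^m / 4" if "m \<ge> 1"
  using that
proof (induction m rule: dec_induct)
  case base then show ?case by simp
next
  case (step k)
  have "(1/3::real)^Suc k / real (Suc k) \<le> (1/3)^Suc k / 2"
    using step(1) by (intro divide_left_mono) auto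
  then show ?case using step(3) by simp
qed

lemma pow3_bound: "3 * real m * real m * (1/3)^m \<le> 1" if "m \<ge> 3"
  using that
proof (induction m rule: dec_induct)
  case base then show ?case by (simp add: power_one_over)
next
  case (step k)
  have "3 * real (Suc k) * real (Suc k) \<le> 3 * (3 * real k * real k)"
  proof -
    have k3: "3 \<le> real k" using step(1) by simp
    have "real k * 3 \<le> real k * real k" using k3 by (intro mult_left_mono) auto
    moreover have "3 * real (Suc k) * real (Suc k) = 3 * (real k * real k) + 6 * real k + 3"
      by (simp add: algebra_simps)
    ultimately show ?thesis using k3 by linarith
  qed
  then have "3 * real (Suc k) * real (Suc k) * (1/3)^Suc k \<le> 3 * (3 * real k * real k) * (1/3)^Suc k"
    by (intro mult_right_mono) auto
  also have "\<dots> = 3 * real k * real k * (1/3)^k" by simp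
  finally show ?case using step(3) by linarith
qed

lemma final_num:
  assumes m: "m \<ge> 1" and q: "0 \<le> q" "q \<le> 1/3"
  shows "(harm (m-1) + (1 - 1/3^m) * (harm m + ln (3/4))) / (real (m+1) * real m)
         \<le> (2 * harm m / real m - q^(m-1) - Gf m q) / real (m+1)"
proof -
  define H :: real where "H = harm m"
  define x :: real where "x = (1/3)^m"
  define \<Sigma> where "\<Sigma> = (\<Sum>i<m. (1/3::real)^Suc i / real (Suc i))"
  have mpos: "real m > 0" using m by simp
  obtain k where k: "m = Suc k" using m by (cases m) auto
  have Hm1: "harm (m-1) = H - 1/real m" unfolding H_def k by (simp add: harm_Suc divide_inverse)
  have x13: "1/3^m = x" unfolding x_def by (simp add: power_one_over)
  have q1: "q^(m-1) \<le> 3 * x"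
  proof -
    have "q^(m-1) \<le> (1/3)^(m-1)" using q by (intro power_mono) auto
    also have "\<dots> = 3 * x" unfolding x_def k by simp
    finally show ?thesis .
  qed
  have G1: "Gf m q \<le> Gf m (1/3)" using q m by (intro Gf_mono) auto
  have l23: "ln (2/3::real) = ln 2 - ln 3" by (simp add: ln_divide_pos)
  have l4: "ln (4::real) = 2 * ln 2"
  proof -
    have "ln (4::real) = ln (2*2)" by simp
    also have "\<dots> = ln 2 + ln 2" by (rule ln_mult_pos) auto
    finally show ?thesis by simp
  qed
  have l34: "ln (3/4::real) = ln 3 - 2 * ln 2" using l4 by (simp add: ln_divide_pos)
  have G13: "real m * Gf m (1/3) = (x - 1) * (ln 3 - ln 2) + \<Sigma>"
    unfolding Gf_def x_def \<Sigma>_def using mpos l23 by simp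
  have S: "\<Sigma> \<le> 5/12 - x/4" unfolding \<Sigma>_def x_def using sum_third[OF m] by simp
  have x0: "0 < x" "x \<le> 1/3" unfolding x_def using m k by (auto simp: power_le_one)
  have H0: "0 \<le> H" unfolding H_def by (rule harm_nonneg)
  have xH: "0 \<le> x * H" using x0 H0 by simp
  have ln2: "2/3 \<le> ln (2::real)" by (rule ln2_ge_two_thirds)
  have l2x: "(1 - x) * (2/3) \<le> (1 - x) * ln 2" using x0 ln2 by (intro mult_left_mono) auto
  have mx: "3 * real m * x \<le> 1 / real m + (1 - x) * (2/3) - 5/12 + x / 4"
  proof (cases "m \<ge> 3")
    case True
    have "3 * real m * real m * x \<le> 1" unfolding x_def by (rule pow3_bound[OF True])
    then have "3 * real m * x \<le> 1 / real m" using mpos by (simp add: field_simps)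
    moreover have "(1 - x) * (2/3) = 2/3 - 2/3 * x" by (simp add: field_simps)
    ultimately show ?thesis using x0 by linarith
  next
    case False
    then have "m = 1 \<or> m = 2" using m by auto
    then show ?thesis unfolding x_def by (auto simp: power2_eq_square)
  qed
  have key: "H - 1/real m + (1 - x) * (H + (ln 3 - 2 * ln 2))
       \<le> real m * (2 * H / real m - 3 * x - Gf m (1/3))"
  proof -
    have "real m * (2 * H / real m - 3 * x - Gf m (1/3)) = 2 * H - 3 * real m * x - real m * Gf m (1/3)"
      using mpos by (simp add: field_simps)
    also have "\<dots> = 2 * H - 3 * real m * x - ((x - 1) * (ln 3 - ln 2) + \<Sigma>)" using G13 by simp
    finally have e: "real m * (2 * H / real m - 3 * x - Gf m (1/3)) = 2 * H - 3 * real m * x - ((x - 1) * (ln 3 - ln 2) + \<Sigma>)" .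
    have "(1 - x) * (H + (ln 3 - 2 * ln 2)) = H - x * H + (1 - x) * ln 3 - 2 * ((1 - x) * ln 2)"
      by (simp add: algebra_simps)
    moreover have "(x - 1) * (ln 3 - ln 2) = - ((1 - x) * ln 3) + (1 - x) * ln 2"
      by (simp add: algebra_simps)
    ultimately show ?thesis unfolding e using S xH l2x mx x0 by (smt (verit))
  qed
  have "(harm (m-1) + (1 - 1/3^m) * (harm m + ln (3/4))) / (real (m+1) * real m)
      = ((H - 1/real m + (1 - x) * (H + (ln 3 - 2 * ln 2))) / real m) / real (m+1)"
    unfolding Hm1 x13 l34 H_def by (simp add: field_simps)
  also have "\<dots> \<le> (2 * H / real m - 3 * x - Gf m (1/3)) / real (m+1)"
    using key mpos by (intro divide_right_mono) (auto simp: pos_divide_le_eq mult.commute)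
  also have "\<dots> \<le> (2 * harm m / real m - q^(m-1) - Gf m q) / real (m+1)"
    unfolding H_def using q1 G1 by (intro divide_right_mono) auto
  finally show ?thesis .
qed

theorem lemma3p1:
  fixes n :: nat and b :: real
  assumes "n \<ge> 3" and "1 < b" and "b \<le> 2"
  shows "(b - 1) ^ (n - 2) * M n b \<ge>
    (harm (n - 3) + (1 - 1 / 3 ^ (n - 2)) * (harm (n - 2) + ln (3 / 4)))
      / ((real n - 1) * (real n - 2))"
proof -
  define m where "m = n - 2"
  have m1: "m \<ge> 1" and nm: "n = m + 2" using assms(1) unfolding m_def by auto
  have b: "1 < b" using assms by simp
  define s where "s = b - 1"
  have s0: "0 < s" and s1: "s \<le> 1" using assms unfolding s_def by auto
  define S :: "real set" where "S = {-1<..<1}"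
  define T :: "real set" where "T = {b<..}"
  define L where "L v = ln ((v-1)/(v-b))" for v
  define R where "R u = ln ((b-u)/(1-u))" for u
  define Q where "Q u v = ln (((v+1)*(b+u))/((v+b)*(1+u)))" for u v
  define Rr where "Rr u = ln ((b+u)/(1+u))" for u
  define NF where "NF u = (\<integral>\<^sup>+v. ennreal (indicator T v * Mint n b u v) \<partial>lborel)" for u
  define NF1 where "NF1 u = (\<integral>\<^sup>+v. ennreal (indicator T v * (L v / (v-u)^n)) \<partial>lborel)" for u
  define NF2 where "NF2 u = (\<integral>\<^sup>+v. ennreal (indicator T v * (R u / (v-u)^n)) \<partial>lborel)" for u
  define NF3 where "NF3 u = (\<integral>\<^sup>+v. ennreal (indicator T v * (Q u v / (v-u)^n)) \<partial>lborel)" for u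
  note pw = pointwise[OF b, folded L_def R_def Q_def Rr_def]

  have mNF[measurable]: "NF \<in> borel_measurable borel"
    unfolding NF_def[abs_def] T_def Mint_def by measurable
  have mNF1[measurable]: "NF1 \<in> borel_measurable borel"
    unfolding NF1_def[abs_def] T_def L_def by measurable
  have mNF2[measurable]: "NF2 \<in> borel_measurable borel"
    unfolding NF2_def[abs_def] T_def R_def by measurable
  have mNF3[measurable]: "NF3 \<in> borel_measurable borel"
    unfolding NF3_def[abs_def] T_def Q_def by measurable

  have M1: "M n b = (LINT u|lborel. indicator S u * enn2real (NF u))"
  proof -
    have "M n b = (LINT u|lborel. indicator S u * (LINT v|lborel. indicator T v * Mint n b u v))"
      unfolding M_def interval_lebesgue_integral_def set_lebesgue_integral_def S_def T_def by simp
    also have "\<dots> = (LINT u|lborel. indicator S u * enn2real (NF u))"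
    proof (rule Bochner_Integration.integral_cong[OF refl])
      fix u
      show "indicator S u * (LINT v|lborel. indicator T v * Mint n b u v) = indicator S u * enn2real (NF u)"
      proof (cases "u \<in> S")
        case True
        then have u: "-1 < u" "u < 1" unfolding S_def by auto
        have "(LINT v|lborel. indicator T v * Mint n b u v) = enn2real (NF u)"
          unfolding NF_def
        proof (rule integral_eq_nn_integral)
          show "(\<lambda>v. indicator T v * Mint n b u v) \<in> borel_measurable lborel"
            unfolding T_def Mint_def by measurable
          show "AE v in lborel. 0 \<le> indicator T v * Mint n b u v"
          proof (rule AE_I2)
            fix v show "0 \<le> indicator T v * Mint n b u v"
            proof (cases "v \<in> T")
              case True
              then have v: "b < v" unfolding T_def by simp
              have "0 \<le> L v / (v-u)^n + R u / (v-u)^n + Q u v / (v-u)^n"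
                using pw(2,3,4,6)[OF u v] by (intro add_nonneg_nonneg divide_nonneg_pos) auto
              then show ?thesis using pw(1)[OF u v] True by simp
            qed simp
          qed
        qed
        then show ?thesis by simp
      qed simp
    qed
    finally show ?thesis .
  qed
  have M2: "(LINT u|lborel. indicator S u * enn2real (NF u))
      = enn2real (\<integral>\<^sup>+u. ennreal (indicator S u * enn2real (NF u)) \<partial>lborel)"
    by (rule integral_eq_nn_integral) (use mNF in \<open>measurable\<close>, auto simp: S_def)

  have dec: "ennreal (indicator S u) * NF u
      = ennreal (indicator S u) * NF1 u + ennreal (indicator S u) * NF2 u + ennreal (indicator S u) * NF3 u" for u
  proof (cases "u \<in> S")
    case True
    then have u: "-1 < u" "u < 1" unfolding S_def by auto
    have "NF u = (\<integral>\<^sup>+v. ennreal (indicator T v * (L v / (v-u)^n)) + ennreal (indicator T v * (R u / (v-u)^n))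
                 + ennreal (indicator T v * (Q u v / (v-u)^n)) \<partial>lborel)"
      unfolding NF_def
    proof (rule nn_integral_cong)
      fix v :: real
      show "ennreal (indicator T v * Mint n b u v) = ennreal (indicator T v * (L v / (v-u)^n)) + ennreal (indicator T v * (R u / (v-u)^n))
                 + ennreal (indicator T v * (Q u v / (v-u)^n))"
      proof (cases "v \<in> T")
        case True
        then have v: "b < v" unfolding T_def by simp
        have a: "0 \<le> L v / (v-u)^n" "0 \<le> R u / (v-u)^n" "0 \<le> Q u v / (v-u)^n"
          using pw(2,3,4,6)[OF u v] by (auto intro!: divide_nonneg_pos)
        show ?thesis using True pw(1)[OF u v] a by simp
      qed simp
    qed
    also have "\<dots> = NF1 u + NF2 u + NF3 u"
    proof -
      have m1: "(\<lambda>v. ennreal (indicator T v * (L v / (v-u)^n))) \<in> borel_measurable lborel"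
        unfolding T_def L_def by measurable
      have m2: "(\<lambda>v. ennreal (indicator T v * (R u / (v-u)^n))) \<in> borel_measurable lborel"
        unfolding T_def R_def by measurable
      have m3: "(\<lambda>v. ennreal (indicator T v * (Q u v / (v-u)^n))) \<in> borel_measurable lborel"
        unfolding T_def Q_def by measurable
      show ?thesis unfolding NF1_def NF2_def NF3_def
        using m1 m2 m3 by (simp add: nn_integral_add)
    qed
    finally show ?thesis by (simp add: distrib_left)
  qed simp

  define E1 where "E1 = (\<integral>\<^sup>+v. ennreal (indicator T v * (L v * (1/(v-1)^(m+1) - 1/(v+1)^(m+1)))) \<partial>lborel)"
  define E2 where "E2 = (\<integral>\<^sup>+v. ennreal (indicator T v * (L v / (v+1)^(m+1))) \<partial>lborel)"
  have NN1: "(\<integral>\<^sup>+u. ennreal (indicator S u) * NF1 u \<partial>lborel) = ennreal (1 / real (m+1)) * E1"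
  proof -
    have "(\<integral>\<^sup>+u. ennreal (indicator S u) * NF1 u \<partial>lborel)
        = (\<integral>\<^sup>+u. (\<integral>\<^sup>+v. ennreal (indicator S u * indicator T v * (L v / (v-u)^n)) \<partial>lborel) \<partial>lborel)"
    proof (rule nn_integral_cong)
      fix u :: real
      have "ennreal (indicator S u) * NF1 u = (\<integral>\<^sup>+v. ennreal (indicator S u) * ennreal (indicator T v * (L v / (v-u)^n)) \<partial>lborel)"
        unfolding NF1_def by (rule nn_integral_cmult[symmetric]) (auto simp: T_def L_def)
      also have "\<dots> = (\<integral>\<^sup>+v. ennreal (indicator S u * indicator T v * (L v / (v-u)^n)) \<partial>lborel)"
        by (rule nn_integral_cong, subst ennreal_mult'[symmetric]) (auto simp: mult.assoc)
      finally show "ennreal (indicator S u) * NF1 u = \<dots>" .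
    qed
    also have "\<dots> = (\<integral>\<^sup>+v. (\<integral>\<^sup>+u. ennreal (indicator S u * indicator T v * (L v / (v-u)^n)) \<partial>lborel) \<partial>lborel)"
      by (rule lborel_pair.Fubini'[symmetric]) (simp add: S_def T_def L_def)
    also have "\<dots> = (\<integral>\<^sup>+v. ennreal (1 / real (m+1)) * ennreal (indicator T v * (L v * (1/(v-1)^(m+1) - 1/(v+1)^(m+1)))) \<partial>lborel)"
    proof (rule nn_integral_cong)
      fix v :: real
      show "(\<integral>\<^sup>+u. ennreal (indicator S u * indicator T v * (L v / (v-u)^n)) \<partial>lborel)
          = ennreal (1 / real (m+1)) * ennreal (indicator T v * (L v * (1/(v-1)^(m+1) - 1/(v+1)^(m+1))))"
      proof (cases "v \<in> T")
        case True
        then have v: "b < v" unfolding T_def by simp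
        have L0: "0 \<le> L v" using pw(2)[OF _ _ v, of 0] by simp
        have "(\<integral>\<^sup>+u. ennreal (indicator S u * indicator T v * (L v / (v-u)^n)) \<partial>lborel)
            = (\<integral>\<^sup>+u. ennreal (L v) * ennreal (indicator {-1<..<1} u * (1 / (v-u)^(m+2))) \<partial>lborel)"
          using True L0 by (intro nn_integral_cong) (simp add: S_def nm ennreal_mult'[symmetric] mult.commute)
        also have "\<dots> = ennreal (L v) * (\<integral>\<^sup>+u. ennreal (indicator {-1<..<1} u * (1 / (v-u)^(m+2))) \<partial>lborel)"
          by (rule nn_integral_cmult) measurable
        also have "\<dots> = ennreal (L v) * ennreal ((1/(v-1)^(m+1) - 1/(v+1)^(m+1)) / real (m+1))"
          using v b by (simp only: int_pow_u[of v m])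
        also have "\<dots> = ennreal (1 / real (m+1)) * ennreal (indicator T v * (L v * (1/(v-1)^(m+1) - 1/(v+1)^(m+1))))"
          using True L0 by (simp add: ennreal_mult'[symmetric] mult_ac)
        finally show ?thesis .
      qed (simp add: S_def)
    qed
    also have "\<dots> = ennreal (1 / real (m+1)) * E1"
      unfolding E1_def by (rule nn_integral_cmult) (simp add: T_def L_def)
    finally show ?thesis .
  qed

  have E12: "E1 + E2 = ennreal (harm m / (real m * s^m))"
  proof -
    have mE1: "(\<lambda>v. ennreal (indicator T v * (L v * (1/(v-1)^(m+1) - 1/(v+1)^(m+1))))) \<in> borel_measurable lborel"
      unfolding T_def L_def by measurable
    have mE2: "(\<lambda>v. ennreal (indicator T v * (L v / (v+1)^(m+1)))) \<in> borel_measurable lborel"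
      unfolding T_def L_def by measurable
    have "E1 + E2 = (\<integral>\<^sup>+v. ennreal (indicator T v * (L v * (1/(v-1)^(m+1) - 1/(v+1)^(m+1))))
                     + ennreal (indicator T v * (L v / (v+1)^(m+1))) \<partial>lborel)"
      unfolding E1_def E2_def by (rule nn_integral_add[OF mE1 mE2, symmetric])
    also have "\<dots> = (\<integral>\<^sup>+v. ennreal (indicator {b<..} v * (ln ((v-1)/(v-b)) / (v-1)^(m+1))) \<partial>lborel)"
    proof (rule nn_integral_cong)
      fix v :: real
      show "ennreal (indicator T v * (L v * (1/(v-1)^(m+1) - 1/(v+1)^(m+1))))
                     + ennreal (indicator T v * (L v / (v+1)^(m+1)))
            = ennreal (indicator {b<..} v * (ln ((v-1)/(v-b)) / (v-1)^(m+1)))"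
      proof (cases "v \<in> T")
        case True
        then have v: "b < v" unfolding T_def by simp
        have L0: "0 \<le> L v" using pw(2)[OF _ _ v, of 0] by simp
        have "(v+1)^(m+1) \<ge> (v-1)^(m+1)" using v b by (intro power_mono) auto
        then have "1/(v+1)^(m+1) \<le> 1/(v-1)^(m+1)" using v b by (intro divide_left_mono mult_pos_pos) auto
        then have a: "0 \<le> L v * (1/(v-1)^(m+1) - 1/(v+1)^(m+1))" using L0 by simp
        have c: "0 \<le> L v / (v+1)^(m+1)" using L0 v b by simp
        have "L v * (1/(v-1)^(m+1) - 1/(v+1)^(m+1)) + L v / (v+1)^(m+1) = L v / (v-1)^(m+1)"
          by (simp add: algebra_simps)
        then show ?thesis using True a c ennreal_plus[OF a c] by (simp add: T_def L_def)
      qed (simp add: T_def)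
    qed
    also have "\<dots> = ennreal (harm m / (real m * s^m))"
      unfolding s_def by (rule int_L[OF b m1])
    finally show ?thesis .
  qed
  have E2b: "E2 \<le> ennreal (1 / ((b+1)^(m-1) * s))"
  proof -
    obtain k where k: "m = Suc k" using m1 by (cases m) auto
    have "E2 \<le> (\<integral>\<^sup>+v. ennreal (1 / (b+1)^k) * ennreal (indicator {b<..} v * (ln ((v-1)/(v-b)) / (v-1)^(1+1))) \<partial>lborel)"
      unfolding E2_def
    proof (rule nn_integral_mono)
      fix v :: real
      show "ennreal (indicator T v * (L v / (v+1)^(m+1)))
          \<le> ennreal (1 / (b+1)^k) * ennreal (indicator {b<..} v * (ln ((v-1)/(v-b)) / (v-1)^(1+1)))"
      proof (cases "v \<in> T")
        case True
        then have v: "b < v" unfolding T_def by simp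
        have L0: "0 \<le> L v" using pw(2)[OF _ _ v, of 0] by simp
        have p1: "(v-1)^2 \<le> (v+1)^2" using v b by (intro power_mono) auto
        have p2: "(b+1)^k \<le> (v+1)^k" using v b by (intro power_mono) auto
        have "(v-1)^2 * (b+1)^k \<le> (v+1)^2 * (v+1)^k" using p1 p2 v b by (intro mult_mono) auto
        also have "\<dots> = (v+1)^(m+1)" unfolding k by (simp add: power_add[symmetric])
        finally have pp: "(v-1)^2 * (b+1)^k \<le> (v+1)^(m+1)" .
        have "L v / (v+1)^(m+1) \<le> L v / ((v-1)^2 * (b+1)^k)"
          using pp L0 v b by (intro divide_left_mono mult_pos_pos) auto
        also have "\<dots> = 1 / (b+1)^k * (L v / (v-1)^(1+1))" by (simp add: power2_eq_square)
        finally have "L v / (v+1)^(m+1) \<le> 1 / (b+1)^k * (L v / (v-1)^(1+1))" .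
        then show ?thesis using True b by (simp add: ennreal_mult'[symmetric] T_def L_def)
      qed (simp add: T_def)
    qed
    also have "\<dots> = ennreal (1 / (b+1)^k) * ennreal (harm 1 / (real 1 * (b-1)^1))"
      by (subst nn_integral_cmult) (measurable, simp only: int_L[OF b, of 1])
    also have "\<dots> = ennreal (1 / ((b+1)^(m-1) * s))"
      using b unfolding k s_def by (simp add: ennreal_mult'[symmetric] harm_expand)
    finally show ?thesis .
  qed

  have NN2: "(\<integral>\<^sup>+u. ennreal (indicator S u) * NF2 u \<partial>lborel)
      = ennreal (1 / real (m+1)) * ennreal ((harm m / real m - Gf m ((b-1)/(b+1))) / (b-1)^m)"
  proof -
    have "(\<integral>\<^sup>+u. ennreal (indicator S u) * NF2 u \<partial>lborel)
      = (\<integral>\<^sup>+u. ennreal (1 / real (m+1)) * ennreal (indicator {-1<..<1} u * (ln ((b-u)/(1-u)) / (b-u)^(m+1))) \<partial>lborel)"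
    proof (rule nn_integral_cong)
      fix u :: real
      show "ennreal (indicator S u) * NF2 u
          = ennreal (1 / real (m+1)) * ennreal (indicator {-1<..<1} u * (ln ((b-u)/(1-u)) / (b-u)^(m+1)))"
      proof (cases "u \<in> S")
        case True
        then have u: "-1 < u" "u < 1" unfolding S_def by auto
        have R0: "0 \<le> R u" using pw(3)[OF u, of "b+1"] b by simp
        have "NF2 u = (\<integral>\<^sup>+v. ennreal (R u) * ennreal (indicator {b<..} v * (1 / (v-u)^(m+2))) \<partial>lborel)"
          unfolding NF2_def using R0
          by (intro nn_integral_cong) (simp add: T_def nm ennreal_mult'[symmetric] mult.commute)
        also have "\<dots> = ennreal (R u) * (\<integral>\<^sup>+v. ennreal (indicator {b<..} v * (1 / (v-u)^(m+2))) \<partial>lborel)"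
          by (rule nn_integral_cmult) measurable
        also have "\<dots> = ennreal (R u) * ennreal (1 / (real (m+1) * (b-u)^(m+1)))"
          using u b by (simp only: int_pow_v[of u b m])
        also have "\<dots> = ennreal (1 / real (m+1)) * ennreal (ln ((b-u)/(1-u)) / (b-u)^(m+1))"
          using R0 u b by (simp add: ennreal_mult'[symmetric] R_def mult.commute)
        finally show ?thesis using True by (simp add: S_def)
      qed (simp add: S_def)
    qed
    also have "\<dots> = ennreal (1 / real (m+1)) * (\<integral>\<^sup>+u. ennreal (indicator {-1<..<1} u * (ln ((b-u)/(1-u)) / (b-u)^(m+1))) \<partial>lborel)"
      by (rule nn_integral_cmult) measurable
    also have "\<dots> = ennreal (1 / real (m+1)) * ennreal ((harm m / real m - Gf m ((b-1)/(b+1))) / (b-1)^m)"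
      by (simp only: int_R[OF b m1])
    finally show ?thesis .
  qed

  have NN3: "(\<integral>\<^sup>+u. ennreal (indicator S u) * NF3 u \<partial>lborel) < \<infinity>"
  proof -
    have "(\<integral>\<^sup>+u. ennreal (indicator S u) * NF3 u \<partial>lborel)
      \<le> (\<integral>\<^sup>+u. ennreal (1 / s^(m+1)) * ennreal (indicator {-1<..<1} u * ln ((b+u)/(1+u))) \<partial>lborel)"
    proof (rule nn_integral_mono)
      fix u :: real
      show "ennreal (indicator S u) * NF3 u
          \<le> ennreal (1 / s^(m+1)) * ennreal (indicator {-1<..<1} u * ln ((b+u)/(1+u)))"
      proof (cases "u \<in> S")
        case True
        then have u: "-1 < u" "u < 1" unfolding S_def by auto
        have Rr0: "0 \<le> Rr u" using pw(4,5)[OF u, of "b+1"] b by linarith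
        have "NF3 u \<le> (\<integral>\<^sup>+v. ennreal (Rr u) * ennreal (indicator {b<..} v * (1 / (v-u)^(m+2))) \<partial>lborel)"
          unfolding NF3_def
        proof (rule nn_integral_mono)
          fix v :: real
          show "ennreal (indicator T v * (Q u v / (v-u)^n)) \<le> ennreal (Rr u) * ennreal (indicator {b<..} v * (1 / (v-u)^(m+2)))"
          proof (cases "v \<in> T")
            case True
            then have v: "b < v" unfolding T_def by simp
            have "Q u v / (v-u)^n \<le> Rr u / (v-u)^n"
              using pw(5)[OF u v] pw(6)[OF u v, of n] by (intro divide_right_mono) auto
            then show ?thesis using True Rr0 by (auto simp: ennreal_mult'[symmetric] T_def nm intro!: ennreal_leI)
          qed (simp add: T_def)
        qed
        also have "\<dots> = ennreal (Rr u) * (\<integral>\<^sup>+v. ennreal (indicator {b<..} v * (1 / (v-u)^(m+2))) \<partial>lborel)"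
          by (rule nn_integral_cmult) measurable
        also have "\<dots> = ennreal (Rr u) * ennreal (1 / (real (m+1) * (b-u)^(m+1)))"
          using u b by (simp only: int_pow_v[of u b m])
        also have "\<dots> \<le> ennreal (Rr u) * ennreal (1 / s^(m+1))"
        proof (intro mult_left_mono ennreal_leI)
          have "s^(m+1) \<le> (b-u)^(m+1)" using u s0 unfolding s_def by (intro power_mono) auto
          also have "\<dots> \<le> real (m+1) * (b-u)^(m+1)" using u b by simp
          finally show "1 / (real (m+1) * (b-u)^(m+1)) \<le> 1 / s^(m+1)"
            using s0 u b by (intro divide_left_mono mult_pos_pos) auto
        qed auto
        finally have "NF3 u \<le> ennreal (Rr u) * ennreal (1 / s^(m+1))" .
        then show ?thesis using True Rr0 by (simp add: S_def Rr_def mult.commute)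
      qed (simp add: S_def)
    qed
    also have "\<dots> = ennreal (1 / s^(m+1)) * (\<integral>\<^sup>+u. ennreal (indicator {-1<..<1} u * ln ((b+u)/(1+u))) \<partial>lborel)"
      by (rule nn_integral_cmult) measurable
    also have "\<dots> < \<infinity>" using int_Rr[OF b] by (simp add: ennreal_mult_less_top)
    finally show ?thesis .
  qed

  define NN where "NN = (\<integral>\<^sup>+u. ennreal (indicator S u) * NF u \<partial>lborel)"
  define N1 where "N1 = (\<integral>\<^sup>+u. ennreal (indicator S u) * NF1 u \<partial>lborel)"
  define N2 where "N2 = (\<integral>\<^sup>+u. ennreal (indicator S u) * NF2 u \<partial>lborel)"
  define N3 where "N3 = (\<integral>\<^sup>+u. ennreal (indicator S u) * NF3 u \<partial>lborel)"
  have NNsum: "NN = N1 + N2 + N3"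
  proof -
    have a1: "(\<lambda>u. ennreal (indicator S u) * NF1 u) \<in> borel_measurable lborel" unfolding S_def by measurable
    have a2: "(\<lambda>u. ennreal (indicator S u) * NF2 u) \<in> borel_measurable lborel" unfolding S_def by measurable
    have a3: "(\<lambda>u. ennreal (indicator S u) * NF3 u) \<in> borel_measurable lborel" unfolding S_def by measurable
    show ?thesis unfolding NN_def N1_def N2_def N3_def dec using a1 a2 a3 by (simp add: nn_integral_add)
  qed
  define P where "P = harm m / (real m * s^m)"
  define c where "c = 1 / ((b+1)^(m-1) * s)"
  define q where "q = (b-1)/(b+1)"
  define Y where "Y = (harm m / real m - Gf m q) / s^m"
  have P0: "0 \<le> P" unfolding P_def using s0 by (simp add: harm_nonneg)
  have c0: "0 \<le> c" unfolding c_def using s0 b by simp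
  have E1fin: "E1 < \<infinity>"
  proof -
    have "E1 \<le> E1 + E2" by simp
    also have "\<dots> < \<infinity>" using E12 by simp
    finally show ?thesis .
  qed
  have E2fin: "E2 < \<infinity>"
  proof -
    have "E2 \<le> E1 + E2" by simp
    also have "\<dots> < \<infinity>" using E12 by simp
    finally show ?thesis .
  qed
  define e1 where "e1 = enn2real E1"
  define e2 where "e2 = enn2real E2"
  have E1e: "E1 = ennreal e1" and E2e: "E2 = ennreal e2" unfolding e1_def e2_def using E1fin E2fin by auto
  have e10: "0 \<le> e1" and e20: "0 \<le> e2" unfolding e1_def e2_def by auto
  have "ennreal e1 + ennreal e2 = ennreal P" using E12 unfolding E1e E2e P_def .
  then have "ennreal (e1 + e2) = ennreal P" using e10 e20 by (simp only: ennreal_plus)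
  then have e12: "e1 + e2 = P" using e10 e20 P0 by (subst (asm) ennreal_inj) auto
  have "ennreal e2 \<le> ennreal c" using E2b unfolding E2e c_def s_def by simp
  then have e2c: "e2 \<le> c" using c0 by simp
  have N1e: "N1 = ennreal (e1 / real (m+1))" unfolding N1_def NN1 E1e using e10 by (simp add: ennreal_mult'[symmetric])
  define Y0 where "Y0 = max 0 Y"
  have N2e: "N2 = ennreal (Y0 / real (m+1))"
  proof -
    have yy: "ennreal Y = ennreal Y0" unfolding Y0_def
      by (cases "Y \<le> 0") (auto simp: ennreal_neg max_def)
    have "N2 = ennreal (1 / real (m+1)) * ennreal Y"
      unfolding N2_def NN2 Y_def q_def s_def ..
    also have "\<dots> = ennreal (1 / real (m+1)) * ennreal Y0" by (simp only: yy)
    also have "\<dots> = ennreal (1 / real (m+1) * Y0)" by (rule ennreal_mult'[symmetric]) simp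
    finally show ?thesis by simp
  qed
  have Nfin: "NN < \<infinity>" unfolding NNsum N1e N2e using NN3[folded N3_def] by simp
  have AEfin: "AE u in lborel. ennreal (indicator S u) * NF u \<noteq> \<infinity>"
    by (rule nn_integral_PInf_AE) (use Nfin in \<open>auto simp: NN_def S_def\<close>)
  have Meq: "M n b = enn2real NN"
  proof -
    have "(\<integral>\<^sup>+u. ennreal (indicator S u * enn2real (NF u)) \<partial>lborel) = NN"
      unfolding NN_def
    proof (rule nn_integral_cong_AE)
      show "AE u in lborel. ennreal (indicator S u * enn2real (NF u)) = ennreal (indicator S u) * NF u"
        using AEfin by eventually_elim (auto simp: indicator_def less_top)
    qed
    then show ?thesis using M1 M2 by simp
  qed
  have NNlow: "ennreal (e1 / real (m+1) + Y0 / real (m+1)) \<le> NN"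
  proof -
    have "ennreal (e1 / real (m+1) + Y0 / real (m+1)) = N1 + N2"
      unfolding N1e N2e using e10 by (simp add: Y0_def)
    also have "\<dots> \<le> NN" unfolding NNsum by simp
    finally show ?thesis .
  qed
  have Mlow: "e1 / real (m+1) + Y0 / real (m+1) \<le> M n b"
  proof -
    have "enn2real (ennreal (e1 / real (m+1) + Y0 / real (m+1))) \<le> enn2real NN"
      using Nfin unfolding infinity_ennreal_def by (rule enn2real_mono[OF NNlow])
    moreover have nn0: "0 \<le> e1 / real (m+1) + Y0 / real (m+1)" using e10 by (simp add: Y0_def)
    ultimately show ?thesis unfolding Meq enn2real_ennreal[OF nn0] by blast
  qed
  have Mlow2: "((P - c) + Y) / real (m+1) \<le> M n b"
  proof -
    have "((P - c) + Y) / real (m+1) \<le> e1 / real (m+1) + Y0 / real (m+1)"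
      using e12 e2c unfolding Y0_def by (simp add: add_divide_distrib[symmetric] divide_right_mono)
    then show ?thesis using Mlow by linarith
  qed
  have q0: "0 \<le> q" and q13: "q \<le> 1/3" unfolding q_def using b assms(3) by (auto simp: field_simps)
  have key: "s^m * (((P - c) + Y) / real (m+1)) = (2 * harm m / real m - q^(m-1) - Gf m q) / real (m+1)"
  proof -
    obtain k where k: "m = Suc k" using m1 by (cases m) auto
    have sm: "s^m \<noteq> 0" using s0 by simp
    have "s^m * P = harm m / real m" unfolding P_def using sm by simp
    moreover have "s^m * Y = harm m / real m - Gf m q" unfolding Y_def using sm by simp
    moreover have "s^m * c = q^(m-1)"
    proof -
      have "s^m * c = s^Suc k / ((b+1)^k * s)" unfolding c_def k by simp
      also have "\<dots> = s^k / (b+1)^k" using s0 by simp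
      also have "\<dots> = q^(m-1)" unfolding q_def k s_def by (simp add: power_divide)
      finally show ?thesis .
    qed
    moreover have "s^m * (P - c + Y) = s^m * P - s^m * c + s^m * Y" by (simp add: algebra_simps)
    moreover have "2 * harm m / real m = harm m / real m + harm m / real m"
      by (simp add: add_divide_distrib[symmetric])
    ultimately have "s^m * (P - c + Y) = 2 * harm m / real m - q^(m-1) - Gf m q"
      by linarith
    then show ?thesis by simp
  qed
  have "(harm (n - 3) + (1 - 1 / 3 ^ (n - 2)) * (harm (n - 2) + ln (3 / 4))) / ((real n - 1) * (real n - 2))
      = (harm (m-1) + (1 - 1/3^m) * (harm m + ln (3/4))) / (real (m+1) * real m)"
  proof -
    have "n - 3 = m - 1" "n - 2 = m" "real n - 1 = real (m+1)" "real n - 2 = real m" unfolding nm by auto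
    then show ?thesis by simp
  qed
  also have "\<dots> \<le> (2 * harm m / real m - q^(m-1) - Gf m q) / real (m+1)"
    by (rule final_num[OF m1 q0 q13])
  also have "\<dots> = s^m * (((P - c) + Y) / real (m+1))" by (rule key[symmetric])
  also have "\<dots> \<le> s^m * M n b" using Mlow2 s0 by (intro mult_left_mono) auto
  also have "\<dots> = (b - 1) ^ (n - 2) * M n b" unfolding s_def m_def ..
  finally show ?thesis .
qed

end
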